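(* If $G$ is a connected graph of order at least $3$ that is not a path, then $\gamma_P(G)\le \frac{1}{2}F_c(G)$, and this bound is sharp (there exist such graphs attaining equality).
   Context: Forcing process: given a set of initially colored vertices, at each step a colored vertex with exactly one non-colored neighbor forces (colors) that neighbor. A set $S\subseteq V(G)$ is a forcing set if iterating this process from $S$ eventually colors all vertices; it is a connected forcing set if moreover the induced subgraph $G[S]$ is connected. $F_c(G)$ is the minimum cardinality of a connected forcing set of $G$. Power domination: for $S\subseteq V$ define $\mathcal{P}_G^0(S)=N[S]$ and $\mathcal{P}_G^{i+1}(S)=\bigcup\{N[v]: v\in \mathcal{P}_G^i(S),\ |N[v]\setminus \mathcal{P}_G^i(S)|\le 1\}$; these stabilize to $\mathcal{P}_G^\infty(S)$, and $S$ is power dominating if $\mathcal{P}_G^\infty(S)=V(G)$. $\gamma_P(G)$ is the minimum cardinality of a power dominating set. *)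

theory Defs
  imports Complex_Main
begin

definition graph :: "'a set \<Rightarrow> ('a \<Rightarrow> 'a \<Rightarrow> bool) \<Rightarrow> bool" where
  "graph V E \<longleftrightarrow> finite V \<and> (\<forall>u v. E u v \<longrightarrow> u \<in> V \<and> v \<in> V)
     \<and> (\<forall>u v. E u v \<longrightarrow> E v u) \<and> (\<forall>v. \<not> E v v)"

definition nbhd :: "'a set \<Rightarrow> ('a \<Rightarrow> 'a \<Rightarrow> bool) \<Rightarrow> 'a \<Rightarrow> 'a set" where
  "nbhd V E v = {u \<in> V. E v u}"

definition cnbhd :: "'a set \<Rightarrow> ('a \<Rightarrow> 'a \<Rightarrow> bool) \<Rightarrow> 'a \<Rightarrow> 'a set" where
  "cnbhd V E v = insert v (nbhd V E v)"

definition cnbhd_set :: "'a set \<Rightarrow> ('a \<Rightarrow> 'a \<Rightarrow> bool) \<Rightarrow> 'a set \<Rightarrow> 'a set" where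
  "cnbhd_set V E S = (\<Union>v\<in>S. cnbhd V E v)"

definition induced_connected :: "('a \<Rightarrow> 'a \<Rightarrow> bool) \<Rightarrow> 'a set \<Rightarrow> bool" where
  "induced_connected E S \<longleftrightarrow>
     (\<forall>u\<in>S. \<forall>v\<in>S. (\<lambda>x y. E x y \<and> x \<in> S \<and> y \<in> S)\<^sup>*\<^sup>* u v)"

definition connected_graph :: "'a set \<Rightarrow> ('a \<Rightarrow> 'a \<Rightarrow> bool) \<Rightarrow> bool" where
  "connected_graph V E \<longleftrightarrow> V \<noteq> {} \<and> induced_connected E V"

definition is_path_graph :: "'a set \<Rightarrow> ('a \<Rightarrow> 'a \<Rightarrow> bool) \<Rightarrow> bool" where
  "is_path_graph V E \<longleftrightarrow> (\<exists>xs. distinct xs \<and> set xs = V \<and>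
     (\<forall>u v. E u v \<longleftrightarrow> (\<exists>i. Suc i < length xs \<and>
        ((u = xs ! i \<and> v = xs ! Suc i) \<or> (v = xs ! i \<and> u = xs ! Suc i)))))"

text \<open>Final coloured set of the forcing process started from S: the least set
  containing S and closed under the colour change rule (a coloured vertex all of
  whose neighbours but w are coloured forces w).\<close>
inductive_set forced_closure :: "'a set \<Rightarrow> ('a \<Rightarrow> 'a \<Rightarrow> bool) \<Rightarrow> 'a set \<Rightarrow> 'a set"
  for V E S where
  base: "v \<in> S \<Longrightarrow> v \<in> forced_closure V E S"
| force: "\<lbrakk>v \<in> forced_closure V E S; w \<in> nbhd V E v;
           \<And>u. u \<in> nbhd V E v \<Longrightarrow> u \<noteq> w \<Longrightarrow> u \<in> forced_closure V E S\<rbrakk> \<Longrightarrow> w \<in> forced_closure V E S"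

definition forcing_set :: "'a set \<Rightarrow> ('a \<Rightarrow> 'a \<Rightarrow> bool) \<Rightarrow> 'a set \<Rightarrow> bool" where
  "forcing_set V E S \<longleftrightarrow> S \<subseteq> V \<and> forced_closure V E S = V"

definition connected_forcing_set :: "'a set \<Rightarrow> ('a \<Rightarrow> 'a \<Rightarrow> bool) \<Rightarrow> 'a set \<Rightarrow> bool" where
  "connected_forcing_set V E S \<longleftrightarrow> forcing_set V E S \<and> induced_connected E S"

definition Fc :: "'a set \<Rightarrow> ('a \<Rightarrow> 'a \<Rightarrow> bool) \<Rightarrow> nat" where
  "Fc V E = (LEAST k. \<exists>S. connected_forcing_set V E S \<and> card S = k)"

primrec pd_obs :: "'a set \<Rightarrow> ('a \<Rightarrow> 'a \<Rightarrow> bool) \<Rightarrow> 'a set \<Rightarrow> nat \<Rightarrow> 'a set" where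
  "pd_obs V E S 0 = cnbhd_set V E S"
| "pd_obs V E S (Suc i) =
     \<Union>{cnbhd V E v | v. v \<in> pd_obs V E S i \<and> card (cnbhd V E v - pd_obs V E S i) \<le> 1}"

definition pd_obs_inf :: "'a set \<Rightarrow> ('a \<Rightarrow> 'a \<Rightarrow> bool) \<Rightarrow> 'a set \<Rightarrow> 'a set" where
  "pd_obs_inf V E S = (\<Union>i. pd_obs V E S i)"

definition power_dominating :: "'a set \<Rightarrow> ('a \<Rightarrow> 'a \<Rightarrow> bool) \<Rightarrow> 'a set \<Rightarrow> bool" where
  "power_dominating V E S \<longleftrightarrow> S \<subseteq> V \<and> pd_obs_inf V E S = V"

definition gammaP :: "'a set \<Rightarrow> ('a \<Rightarrow> 'a \<Rightarrow> bool) \<Rightarrow> nat" where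
  "gammaP V E = (LEAST k. \<exists>S. power_dominating V E S \<and> card S = k)"

end

theory Submission
  imports Defs
begin

lemma closure_empty: "forced_closure V E {} = {}"
proof -
  have "x \<in> forced_closure V E {} \<Longrightarrow> False" for x
    by (induction rule: forced_closure.induct) auto
  then show ?thesis by blast
qed

lemma closure_sub: "graph V E \<Longrightarrow> S \<subseteq> V \<Longrightarrow> forced_closure V E S \<subseteq> V"
proof
  fix x assume g: "graph V E" and s: "S \<subseteq> V" and x: "x \<in> forced_closure V E S"
  from x show "x \<in> V"
  proof (induction rule: forced_closure.induct)
    case (base v) then show ?case using s by blast
  next
    case (force v w) show ?case using force.hyps(2) by (simp add: nbhd_def)
  qed
qed

lemma closure_V: "graph V E \<Longrightarrow> forced_closure V E V = V"
proof (rule equalityI)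
  assume "graph V E"
  then show "forced_closure V E V \<subseteq> V" using closure_sub by blast
  show "V \<subseteq> forced_closure V E V" by (rule subsetI, rule forced_closure.base)
qed

lemma single_forcing_path:
  assumes g: "graph V E" and vV: "v \<in> V" and f: "forced_closure V E {v} = V"
  shows "is_path_graph V E"
proof -
  have fin: "finite V" and sym: "\<And>a b. E a b \<Longrightarrow> E b a" and irr: "\<And>a. \<not> E a a"
    and inV: "\<And>a b. E a b \<Longrightarrow> a \<in> V \<and> b \<in> V"
    using g unfolding graph_def by blast+
  define Q where "Q xs \<longleftrightarrow> xs \<noteq> [] \<and> xs!0 = v \<and> distinct xs \<and> set xs \<subseteq> V \<and>
     (\<forall>i. Suc i < length xs \<longrightarrow> (\<forall>u. E (xs!i) u \<longleftrightarrow> (u = xs!Suc i \<or> (0 < i \<and> u = xs!(i-1)))))"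
    for xs
  have Q1: "Q [v]" using vV unfolding Q_def by simp
  have bnd: "\<forall>ys. Q ys \<longrightarrow> length ys < Suc (card V)"
  proof (intro allI impI)
    fix ys assume "Q ys"
    then have "distinct ys" "set ys \<subseteq> V" unfolding Q_def by simp_all
    then show "length ys < Suc (card V)"
      proof -
      have "length ys = card (set ys)" using distinct_card[of ys] \<open>distinct ys\<close> by simp
      also have "\<dots> \<le> card V" using card_mono[OF fin \<open>set ys \<subseteq> V\<close>] .
      finally show ?thesis by simp
    qed
  qed
  obtain xs where Qx: "Q xs" and mx: "\<And>ys. Q ys \<Longrightarrow> length ys \<le> length xs"
    using ex_has_greatest_nat[of Q "[v]" length, OF Q1 bnd] by blast
  have ne: "xs \<noteq> []" and x0: "xs!0 = v" and dx: "distinct xs" and sx: "set xs \<subseteq> V"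
    and px: "\<And>i u. Suc i < length xs \<Longrightarrow> E (xs!i) u \<longleftrightarrow> (u = xs!Suc i \<or> (0 < i \<and> u = xs!(i-1)))"
    using Qx unfolding Q_def by simp_all
  have cl: "forced_closure V E {v} \<subseteq> set xs"
  proof
    fix y assume "y \<in> forced_closure V E {v}"
    then show "y \<in> set xs"
    proof (induction rule: forced_closure.induct)
      case (base y)
      then have "y = xs!0" using x0 by simp
      moreover have "0 < length xs" using ne by simp
      ultimately show ?case by simp
    next
      case (force x w)
      from force.IH obtain i where il: "i < length xs" and xi: "x = xs!i"
        by (auto simp: in_set_conv_nth)
      have Exw: "E x w" using force.hyps(2) by (simp add: nbhd_def)
      show ?case
      proof (cases "Suc i < length xs")
        case True
        have "w = xs!Suc i \<or> (0 < i \<and> w = xs!(i-1))" using px[OF True, of w] Exw xi by simp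
        moreover have "xs!Suc i \<in> set xs" using True by simp
        moreover have "i - 1 < length xs" using il by linarith
        then have "xs!(i-1) \<in> set xs" by simp
        ultimately show ?thesis by blast
      next
        case False
        then have ilast: "i = length xs - 1" using il by linarith
        show ?thesis
        proof (rule ccontr)
          assume wn: "w \<notin> set xs"
          define ys where "ys = xs @ [w]"
          have wV: "w \<in> V" using inV[OF Exw] by blast
          have nb: "u \<in> set xs" if "E x u" "u \<noteq> w" for u
          proof -
            have "u \<in> nbhd V E x" using that inV[OF that(1)] by (simp add: nbhd_def)
            then show ?thesis using force.IH(2) that(2) by blast
          qed
          have key: "E x u \<longleftrightarrow> (u = w \<or> (0 < i \<and> u = xs!(i-1)))" for u
          proof
            assume Exu: "E x u"
            show "u = w \<or> (0 < i \<and> u = xs!(i-1))"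
            proof (cases "u = w")
              case False
              then have "u \<in> set xs" using nb Exu by blast
              then obtain k where kl: "k < length xs" and uk: "u = xs!k" by (auto simp: in_set_conv_nth)
              have "k \<noteq> i" using irr Exu xi uk by blast
              then have ki: "k < i" using kl ilast by linarith
              then have sk: "Suc k < length xs" using il by linarith
              have "E (xs!k) x" using sym Exu uk by blast
              then have "x = xs!Suc k \<or> (0 < k \<and> x = xs!(k-1))" using px[OF sk, of x] by simp
              then have "i = Suc k"
              proof
                assume "x = xs!Suc k"
                then show ?thesis using xi nth_eq_iff_index_eq[OF dx il sk] by simp
              next
                assume h: "0 < k \<and> x = xs!(k-1)"
                then have "k - 1 < length xs" using kl by linarith
                then have "i = k - 1" using h xi nth_eq_iff_index_eq[OF dx il] by simp
                then show ?thesis using ki h by linarith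
              qed
              then show ?thesis using uk by simp
            qed simp
          next
            assume "u = w \<or> (0 < i \<and> u = xs!(i-1))"
            then show "E x u"
            proof
              assume "u = w" then show ?thesis using Exw by simp
            next
              assume h: "0 < i \<and> u = xs!(i-1)"
              then have "Suc (i-1) < length xs" using il by linarith
              then have "E (xs!(i-1)) (xs!Suc (i-1))" using px[of "i-1" "xs!Suc (i-1)"] by simp
              then show ?thesis using h xi sym by simp
            qed
          qed
          have "Q ys"
            unfolding Q_def
          proof (intro conjI allI impI)
            show "ys \<noteq> []" by (simp add: ys_def)
            show "ys!0 = v" using ne x0 by (simp add: ys_def nth_append)
            show "distinct ys" using dx wn by (simp add: ys_def)
            show "set ys \<subseteq> V" using sx wV by (simp add: ys_def)
          next
            fix j u assume jl: "Suc j < length ys"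
            show "E (ys!j) u \<longleftrightarrow> (u = ys!Suc j \<or> (0 < j \<and> u = ys!(j-1)))"
            proof (cases "Suc j < length xs")
              case True
              have "j - 1 < length xs" using True by linarith
              then show ?thesis using px[OF True, of u] True by (simp add: ys_def nth_append)
            next
              case False
              then have ji: "j = i" using jl ilast ys_def by simp
              have a: "ys!j = x" using ji xi il by (simp add: ys_def nth_append)
              have b: "ys!Suc j = w" using ji ilast ne by (simp add: ys_def nth_append)
              have c: "0 < j \<Longrightarrow> ys!(j-1) = xs!(i-1)"
              proof -
                have "i - 1 < length xs" using il by linarith
                then show "ys!(j-1) = xs!(i-1)" using ji by (simp add: ys_def nth_append)
              qed
              show ?thesis
              proof (cases "0 < j")
                case True then show ?thesis using key[of u] a b c[OF True] ji by simp
              next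
                case False then show ?thesis using key[of u] a b ji by simp
              qed
            qed
          qed
          then have "length ys \<le> length xs" by (rule mx)
          then show False by (simp add: ys_def)
        qed
      qed
    qed
  qed
  have sV: "set xs = V" using cl f sx by blast
  have edge: "E a b \<longleftrightarrow> (\<exists>i. Suc i < length xs \<and>
        ((a = xs ! i \<and> b = xs ! Suc i) \<or> (b = xs ! i \<and> a = xs ! Suc i)))" for a b
  proof
    assume Eab: "E a b"
    have gen: "\<exists>i. Suc i < length xs \<and>
      ((c = xs ! i \<and> d = xs ! Suc i) \<or> (d = xs ! i \<and> c = xs ! Suc i))"
      if Ecd: "E c d" and cr: "c = xs!r" and rl: "Suc r < length xs" for c d r
    proof -
      have "E (xs!r) d" using Ecd cr by simp
      then have "d = xs!Suc r \<or> (0 < r \<and> d = xs!(r-1))" using px[OF rl, of d] by simp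
      then show ?thesis
      proof
        assume "d = xs!Suc r"
        then show ?thesis using cr rl by (intro exI[of _ r]) simp
      next
        assume h: "0 < r \<and> d = xs!(r-1)"
        then have r1: "Suc (r-1) = r" by simp
        show ?thesis using cr rl h r1 by (intro exI[of _ "r-1"]) simp
      qed
    qed
    have "a \<in> set xs" "b \<in> set xs" using inV[OF Eab] sV by auto
    then obtain p q where pl: "p < length xs" and ap: "a = xs!p"
      and ql: "q < length xs" and bq: "b = xs!q" by (metis in_set_conv_nth)
    show "\<exists>i. Suc i < length xs \<and>
      ((a = xs ! i \<and> b = xs ! Suc i) \<or> (b = xs ! i \<and> a = xs ! Suc i))"
    proof (cases "Suc p < length xs")
      case True show ?thesis by (rule gen[OF Eab ap True])
    next
      case pF: False
      show ?thesis
      proof (cases "Suc q < length xs")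
        case True
        from gen[OF sym[OF Eab] bq True] obtain i where i1: "Suc i < length xs" and
          i2: "(b = xs ! i \<and> a = xs ! Suc i) \<or> (a = xs ! i \<and> b = xs ! Suc i)"
          by (elim exE conjE)
        from i2 have "(a = xs ! i \<and> b = xs ! Suc i) \<or> (b = xs ! i \<and> a = xs ! Suc i)"
          by (rule disjE) (rule disjI2, assumption, rule disjI1, assumption)
        with i1 show ?thesis by (intro exI[of _ i] conjI)
      next
        case False
        then have "p = q" using pF pl ql by linarith
        then have "a = b" using ap bq by simp
        then show ?thesis using Eab irr by simp
      qed
    qed
  next
    assume "\<exists>i. Suc i < length xs \<and>
      ((a = xs ! i \<and> b = xs ! Suc i) \<or> (b = xs ! i \<and> a = xs ! Suc i))"
    then obtain i where il: "Suc i < length xs" and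
      h: "(a = xs ! i \<and> b = xs ! Suc i) \<or> (b = xs ! i \<and> a = xs ! Suc i)" by (elim exE conjE)
    have e: "E (xs!i) (xs!Suc i)" using px[OF il, of "xs!Suc i"] by simp
    from h show "E a b"
    proof
      assume "a = xs ! i \<and> b = xs ! Suc i" then show ?thesis using e by simp
    next
      assume "b = xs ! i \<and> a = xs ! Suc i" then show ?thesis using sym[OF e] by simp
    qed
  qed
  show ?thesis
    unfolding is_path_graph_def
    by (rule exI[of _ xs], intro conjI allI dx sV edge)
qed

lemma ore:
  assumes fin: "finite S" and nb: "\<And>x. x \<in> S \<Longrightarrow> \<exists>y\<in>S. E x y"
    and sym: "\<And>a b. E a b \<Longrightarrow> E b a" and irr: "\<And>a. \<not> E a a"
  shows "\<exists>D\<subseteq>S. (\<forall>x\<in>S. x \<in> D \<or> (\<exists>d\<in>D. E d x)) \<and> 2 * card D \<le> card S"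
proof -
  define dom where "dom D \<longleftrightarrow> D \<subseteq> S \<and> (\<forall>x\<in>S. x \<in> D \<or> (\<exists>d\<in>D. E d x))" for D
  have "dom S" unfolding dom_def by blast
  then obtain D where dD: "dom D" and mn: "\<And>D'. dom D' \<Longrightarrow> card D \<le> card D'"
    using ex_has_least_nat[of dom S card] by blast
  have DS: "D \<subseteq> S" using dD dom_def by blast
  have finD: "finite D" using DS fin finite_subset by blast
  have "dom (S - D)"
    unfolding dom_def
  proof (intro conjI ballI)
    show "S - D \<subseteq> S" by blast
  next
    fix x assume xS: "x \<in> S"
    show "x \<in> S - D \<or> (\<exists>d\<in>S - D. E d x)"
    proof (rule ccontr)
      assume H: "\<not> (x \<in> S - D \<or> (\<exists>d\<in>S - D. E d x))"
      then have xD: "x \<in> D" using xS by blast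
      have "dom (D - {x})"
        unfolding dom_def
      proof (intro conjI ballI)
        show "D - {x} \<subseteq> S" using DS by blast
      next
        fix y assume yS: "y \<in> S"
        show "y \<in> D - {x} \<or> (\<exists>d\<in>D - {x}. E d y)"
        proof (cases "y = x")
          case True
          obtain z where zS: "z \<in> S" and Exz: "E x z" using nb[OF xS] by blast
          have "z \<in> D" using H zS sym[OF Exz] by blast
          moreover have "z \<noteq> x" using irr Exz by blast
          ultimately show ?thesis using True sym[OF Exz] by blast
        next
          case False
          show ?thesis
          proof (cases "y \<in> D")
            case True then show ?thesis using False by blast
          next
            case yD: False
            then obtain d where dD': "d \<in> D" and Edy: "E d y" using dD yS unfolding dom_def by blast
            have "d \<noteq> x" using H yS yD Edy sym by blast
            then show ?thesis using dD' Edy by blast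
          qed
        qed
      qed
      then have "card D \<le> card (D - {x})" by (rule mn)
      moreover have "card (D - {x}) < card D" using finD xD by (rule card_Diff1_less)
      ultimately show False by simp
    qed
  qed
  then have "card D \<le> card (S - D)" by (rule mn)
  moreover have "card (S - D) = card S - card D" using card_Diff_subset[OF finD DS] .
  moreover have "card D \<le> card S" using card_mono[OF fin DS] .
  ultimately have "2 * card D \<le> card S" by linarith
  then show ?thesis using dD DS unfolding dom_def by blast
qed

lemma pd_step: "x \<in> pd_obs V E D i \<Longrightarrow> card (cnbhd V E x - pd_obs V E D i) \<le> 1
   \<Longrightarrow> cnbhd V E x \<subseteq> pd_obs V E D (Suc i)"
  by (simp only: pd_obs.simps) blast

lemma cnbhd_self: "x \<in> cnbhd V E x"
  by (simp add: cnbhd_def)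

lemma pd_aux: "y \<in> pd_obs V E D i \<Longrightarrow> D \<subseteq> V \<Longrightarrow>
   \<exists>x. y \<in> cnbhd V E x \<and> x \<in> pd_obs V E D i \<and> cnbhd V E x \<subseteq> pd_obs V E D i"
proof (induction i arbitrary: y)
  case 0
  then obtain d where d: "d \<in> D" "y \<in> cnbhd V E d"
    unfolding pd_obs.simps cnbhd_set_def by blast
  have sub: "cnbhd V E d \<subseteq> pd_obs V E D 0"
    using d(1) unfolding pd_obs.simps cnbhd_set_def by blast
  show ?case
    by (rule exI[of _ d], intro conjI d(2) sub subsetD[OF sub cnbhd_self])
next
  case (Suc i)
  from Suc.prems(1) obtain x where x: "x \<in> pd_obs V E D i"
    "card (cnbhd V E x - pd_obs V E D i) \<le> 1" "y \<in> cnbhd V E x"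
    by (simp only: pd_obs.simps) blast
  have sub: "cnbhd V E x \<subseteq> pd_obs V E D (Suc i)" using pd_step[OF x(1,2)] .
  show ?case
    by (rule exI[of _ x], intro conjI x(3) sub subsetD[OF sub cnbhd_self])
qed

lemma pd_mono1: "D \<subseteq> V \<Longrightarrow> pd_obs V E D i \<subseteq> pd_obs V E D (Suc i)"
proof
  fix y assume DV: "D \<subseteq> V" and yi: "y \<in> pd_obs V E D i"
  from pd_aux[OF yi DV] obtain x where x: "y \<in> cnbhd V E x" "x \<in> pd_obs V E D i" "cnbhd V E x \<subseteq> pd_obs V E D i"
    by blast
  have e: "cnbhd V E x - pd_obs V E D i = {}" using x(3) by blast
  have "card (cnbhd V E x - pd_obs V E D i) = 0" unfolding e by (rule card.empty)
  then have "card (cnbhd V E x - pd_obs V E D i) \<le> 1" by linarith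
  then have "cnbhd V E x \<subseteq> pd_obs V E D (Suc i)" using pd_step[OF x(2)] by blast
  then show "y \<in> pd_obs V E D (Suc i)" using x(1) by blast
qed

lemma fin_common:
  fixes f :: "nat \<Rightarrow> 'a set"
  assumes mono: "\<And>i. f i \<subseteq> f (Suc i)"
  shows "finite A \<Longrightarrow> A \<subseteq> (\<Union>i. f i) \<Longrightarrow> \<exists>j. A \<subseteq> f j"
proof (induction A rule: finite_induct)
  case empty then show ?case by blast
next
  case (insert a A)
  then obtain j where j: "A \<subseteq> f j" by blast
  obtain k where k: "a \<in> f k" using insert.prems by blast
  have "f j \<subseteq> f (max j k)" "f k \<subseteq> f (max j k)"
    using lift_Suc_mono_le[of f, OF mono] by (simp_all)
  then show ?case using j k by blast
qed

lemma cnbhd_sub: "v \<in> V \<Longrightarrow> cnbhd V E v \<subseteq> V"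
  by (auto simp: cnbhd_def nbhd_def)

lemma pd_sub: "D \<subseteq> V \<Longrightarrow> pd_obs V E D i \<subseteq> V"
proof (induction i)
  case 0
  show ?case unfolding pd_obs.simps cnbhd_set_def
  proof (rule UN_least)
    fix d assume "d \<in> D"
    then have "d \<in> V" using 0 by (rule subsetD[rotated])
    then show "cnbhd V E d \<subseteq> V" by (rule cnbhd_sub)
  qed
next
  case (Suc i)
  then have IH: "pd_obs V E D i \<subseteq> V" by simp
  show ?case unfolding pd_obs.simps(2)
  proof (rule Union_least)
    fix X assume "X \<in> {cnbhd V E v |v. v \<in> pd_obs V E D i \<and> card (cnbhd V E v - pd_obs V E D i) \<le> 1}"
    then obtain v where "X = cnbhd V E v" "v \<in> pd_obs V E D i" by blast
    then show "X \<subseteq> V" using cnbhd_sub[of v V E] IH by auto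
  qed
qed

lemma pd_from_forcing:
  assumes g: "graph V E" and DV: "D \<subseteq> V" and SD: "S \<subseteq> cnbhd_set V E D"
    and f: "forced_closure V E S = V"
  shows "power_dominating V E D"
proof -
  have finV: "finite V" using g unfolding graph_def by (elim conjE)
  have "forced_closure V E S \<subseteq> pd_obs_inf V E D"
  proof
    fix y assume "y \<in> forced_closure V E S"
    then show "y \<in> pd_obs_inf V E D"
    proof (induction rule: forced_closure.induct)
      case (base v)
      then have "v \<in> pd_obs V E D 0" using SD unfolding pd_obs.simps by (rule subsetD[rotated])
      then show ?case unfolding pd_obs_inf_def by (rule UN_I[rotated]) simp
    next
      case (force v w)
      have vi: "v \<in> pd_obs_inf V E D" by (rule force.IH(1))
      have ui: "u \<in> pd_obs_inf V E D" if "u \<in> nbhd V E v" "u \<noteq> w" for u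
        by (rule force.IH(2)[OF that])
      let ?A = "insert v (nbhd V E v - {w})"
      have "nbhd V E v \<subseteq> V" unfolding nbhd_def by (rule subsetI) (elim CollectE conjE)
      then have "finite (nbhd V E v)" using finV by (rule finite_subset)
      then have finA: "finite ?A" by simp
      have "?A \<subseteq> (\<Union>i. pd_obs V E D i)"
      proof
        fix u assume "u \<in> ?A"
        then have "u \<in> pd_obs_inf V E D" using vi ui by (elim insertE DiffE) auto
        then show "u \<in> (\<Union>i. pd_obs V E D i)" unfolding pd_obs_inf_def .
      qed
      from fin_common[of "pd_obs V E D", OF pd_mono1[OF DV] finA this]
      obtain j where j: "?A \<subseteq> pd_obs V E D j" by (elim exE)
      have sw: "cnbhd V E v - pd_obs V E D j \<subseteq> {w}" using j unfolding cnbhd_def by blast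
      have "card (cnbhd V E v - pd_obs V E D j) \<le> card {w}"
        by (rule card_mono[OF _ sw]) simp
      then have c1: "card (cnbhd V E v - pd_obs V E D j) \<le> 1" by simp
      have vj: "v \<in> pd_obs V E D j" using j by blast
      have "cnbhd V E v \<subseteq> pd_obs V E D (Suc j)" by (rule pd_step[OF vj c1])
      moreover have "w \<in> cnbhd V E v" using force.hyps(2) unfolding cnbhd_def by (rule insertI2)
      ultimately have "w \<in> pd_obs V E D (Suc j)" by (rule subsetD)
      then show ?case unfolding pd_obs_inf_def by (rule UN_I[rotated]) simp
    qed
  qed
  moreover have "pd_obs_inf V E D \<subseteq> V"
    unfolding pd_obs_inf_def by (rule UN_least) (rule pd_sub[OF DV])
  ultimately show ?thesis using f DV unfolding power_dominating_def by blast
qed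

lemma part1:
  fixes V :: "'a set"
  assumes g: "graph V E" and c: "connected_graph V E" and n3: "card V \<ge> 3"
    and np: "\<not> is_path_graph V E"
  shows "real (gammaP V E) \<le> real (Fc V E) / 2"
proof -
  have finV: "finite V" and sym: "\<And>a b. E a b \<Longrightarrow> E b a" and irr: "\<And>a. \<not> E a a"
    using g unfolding graph_def by blast+
  have "connected_forcing_set V E V"
    using c closure_V[OF g] unfolding connected_forcing_set_def forcing_set_def connected_graph_def
    by blast
  then have "\<exists>k. \<exists>S. connected_forcing_set V E S \<and> card S = k" by blast
  then have "\<exists>S. connected_forcing_set V E S \<and> card S = (LEAST k. \<exists>S. connected_forcing_set V E S \<and> card S = k)"
    by (rule LeastI_ex)
  then have "\<exists>S. connected_forcing_set V E S \<and> card S = Fc V E" unfolding Fc_def .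
  then obtain S where cS: "connected_forcing_set V E S" and cardS: "card S = Fc V E" by blast
  have SV: "S \<subseteq> V" and fS: "forced_closure V E S = V" and icS: "induced_connected E S"
    using cS unfolding connected_forcing_set_def forcing_set_def by auto
  have finS: "finite S" using SV finV finite_subset by blast
  have c2: "card S \<ge> 2"
  proof (rule ccontr)
    assume "\<not> card S \<ge> 2"
    then consider "card S = 0" | "card S = 1" by linarith
    then show False
    proof cases
      case 1
      then have "S = {}" using finS by simp
      then have "V = {}" using fS closure_empty by metis
      then show False using n3 by simp
    next
      case 2
      then obtain v where "S = {v}" using card_1_singletonE by blast
      then show False using single_forcing_path[OF g _ ] fS SV np by blast
    qed
  qed
  have nb: "\<exists>y\<in>S. E x y" if xS: "x \<in> S" for x
  proof -
    have "card (S - {x}) > 0" using c2 xS finS by simp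
    then have "S - {x} \<noteq> {}" using card_gt_0_iff by blast
    then obtain y where yS: "y \<in> S" and yx: "y \<noteq> x" by blast
    have "(\<lambda>x y. E x y \<and> x \<in> S \<and> y \<in> S)\<^sup>*\<^sup>* x y" using icS xS yS unfolding induced_connected_def by blast
    then show ?thesis
      using yx by (cases rule: converse_rtranclpE) auto
  qed
  obtain D where DS: "D \<subseteq> S" and dom: "\<forall>x\<in>S. x \<in> D \<or> (\<exists>d\<in>D. E d x)"
    and cD: "2 * card D \<le> card S"
    using ore[OF finS nb sym irr] by blast
  have DV: "D \<subseteq> V" using DS SV by blast
  have "S \<subseteq> cnbhd_set V E D"
  proof
    fix x assume xS: "x \<in> S"
    then have xV: "x \<in> V" using SV by blast
    from dom xS show "x \<in> cnbhd_set V E D"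
      using xV by (auto simp: cnbhd_set_def cnbhd_def nbhd_def)
  qed
  then have "power_dominating V E D" using pd_from_forcing[OF g DV _ fS] by blast
  then have "gammaP V E \<le> card D" unfolding gammaP_def by (intro Least_le) blast
  then show ?thesis using cD cardS by simp
qed


lemma pd_empty: "pd_obs V E {} i = {}"
  by (induction i) (auto simp: cnbhd_set_def)

lemma part2:
  "\<exists>(V :: nat set) E. graph V E \<and> connected_graph V E \<and> card V \<ge> 3 \<and>
            \<not> is_path_graph V E \<and> real (gammaP V E) = real (Fc V E) / 2"
proof -
  define V :: "nat set" where "V = {0,1,2}"
  define E where "E = (\<lambda>u v. u \<noteq> v \<and> u \<in> V \<and> v \<in> V)"
  have g: "graph V E" unfolding graph_def E_def V_def by auto
  have ic: "induced_connected E V"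
    unfolding induced_connected_def
  proof (intro ballI)
    fix u v assume "u \<in> V" "v \<in> V"
    then show "(\<lambda>x y. E x y \<and> x \<in> V \<and> y \<in> V)\<^sup>*\<^sup>* u v"
      by (cases "u = v") (auto simp: E_def)
  qed
  have c: "connected_graph V E" using ic unfolding connected_graph_def V_def by auto
  have n3: "card V \<ge> 3" unfolding V_def by simp
  have np: "\<not> is_path_graph V E"
  proof
    assume "is_path_graph V E"
    then obtain xs where d: "distinct xs" and s: "set xs = V" and
      e: "\<And>u v. E u v \<longleftrightarrow> (\<exists>i. Suc i < length xs \<and>
        ((u = xs ! i \<and> v = xs ! Suc i) \<or> (v = xs ! i \<and> u = xs ! Suc i)))"
      unfolding is_path_graph_def by blast
    have l: "length xs = 3" using distinct_card[OF d] s unfolding V_def by simp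
    have n01: "xs!0 \<noteq> xs!1" "xs!0 \<noteq> xs!2" "xs!1 \<noteq> xs!2"
      using nth_eq_iff_index_eq[OF d] l by auto
    have "xs!0 \<in> V" "xs!2 \<in> V" using s l by (metis nth_mem zero_less_numeral, metis nth_mem lessI numeral_3_eq_3 numeral_2_eq_2)
    then have "E (xs!0) (xs!2)" using n01 unfolding E_def by blast
    then obtain i where i: "Suc i < 3" and
      h: "(xs!0 = xs ! i \<and> xs!2 = xs ! Suc i) \<or> (xs!2 = xs ! i \<and> xs!0 = xs ! Suc i)"
      using e l by auto
    have "i = 0 \<or> i = 1" using i by linarith
    then show False using h n01 by (auto simp: numeral_2_eq_2)
  qed
  have le: "real (gammaP V E) \<le> real (Fc V E) / 2" using part1[OF g c n3 np] .
  have pd0: "power_dominating V E {0}"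
    unfolding power_dominating_def pd_obs_inf_def
  proof
    show "{0} \<subseteq> V" unfolding V_def by simp
    have "pd_obs V E {0} 0 = V" unfolding V_def E_def by (auto simp: cnbhd_set_def cnbhd_def nbhd_def)
    moreover have "pd_obs V E {0} i \<subseteq> V" for i using pd_sub \<open>{0} \<subseteq> V\<close> by blast
    ultimately show "(\<Union>i. pd_obs V E {0} i) = V" by blast
  qed
  have g1: "gammaP V E \<ge> 1"
  proof (rule ccontr)
    assume "\<not> gammaP V E \<ge> 1"
    then have z: "gammaP V E = 0" by simp
    have "\<exists>k. \<exists>S. power_dominating V E S \<and> card S = k" using pd0 by blast
    then have "\<exists>S. power_dominating V E S \<and> card S = gammaP V E"
      unfolding gammaP_def by (rule LeastI_ex)
    then obtain S where S: "power_dominating V E S" "card S = 0" using z by auto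
    have "S \<subseteq> V" using S unfolding power_dominating_def by blast
    then have "finite S" unfolding V_def using finite_subset by blast
    then have "S = {}" using S by simp
    moreover have "pd_obs_inf V E {} = {}" by (simp add: pd_obs_inf_def pd_empty)
    ultimately have "V = {}" using S unfolding power_dominating_def by simp
    then show False unfolding V_def by simp
  qed
  have cf: "connected_forcing_set V E {0,1}"
    unfolding connected_forcing_set_def forcing_set_def
  proof (intro conjI)
    show "{0,1} \<subseteq> V" unfolding V_def by auto
    have "(2::nat) \<in> forced_closure V E {0,1}"
    proof (rule forced_closure.force[of 0])
      show "0 \<in> forced_closure V E {0,1}" by (rule forced_closure.base) simp
      show "2 \<in> nbhd V E 0" unfolding nbhd_def E_def V_def by simp
    next
      fix u assume "u \<in> nbhd V E 0" "u \<noteq> 2"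
      then have "u = 1" unfolding nbhd_def E_def V_def by auto
      then show "u \<in> forced_closure V E {0,1}" by (simp add: forced_closure.base)
    qed
    moreover have "0 \<in> forced_closure V E {0,1}" "1 \<in> forced_closure V E {0,1}"
      by (simp_all add: forced_closure.base)
    moreover have "forced_closure V E {0,1} \<subseteq> V" using closure_sub[OF g] \<open>{0,1} \<subseteq> V\<close> by blast
    ultimately show "forced_closure V E {0,1} = V" unfolding V_def by auto
    show "induced_connected E {0,1}"
      unfolding induced_connected_def
    proof (intro ballI)
      fix u v :: nat assume "u \<in> {0,1}" "v \<in> {0,1}"
      then show "(\<lambda>x y. E x y \<and> x \<in> {0,1} \<and> y \<in> {0,1})\<^sup>*\<^sup>* u v"
        by (cases "u = v") (auto simp: E_def V_def)
    qed
  qed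
  have f2: "Fc V E \<le> 2"
    unfolding Fc_def by (rule Least_le) (use cf in auto)
  have "gammaP V E = 1" "Fc V E = 2" using le g1 f2 by linarith+
  then have "real (gammaP V E) = real (Fc V E) / 2" by simp
  then show ?thesis using g c n3 np by blast
qed

theorem proposition2:
  shows "(\<forall>(V :: 'a set) E. graph V E \<and> connected_graph V E \<and> card V \<ge> 3 \<and>
            \<not> is_path_graph V E \<longrightarrow> real (gammaP V E) \<le> real (Fc V E) / 2)
       \<and> (\<exists>(V :: nat set) E. graph V E \<and> connected_graph V E \<and> card V \<ge> 3 \<and>
            \<not> is_path_graph V E \<and> real (gammaP V E) = real (Fc V E) / 2)"
  using part1 part2 by blast

end
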